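(* Let $B$ be an $n\times n$ matrix of non-negative integers whose last $n-m$ rows are zero, where $m\neq n$. Suppose $A=J_{nm}+B$ is irreducible and its top-left $m\times m$ corner is irreducible. Then for every integer $k\ge n+2$ there is a $k\times k$ integer matrix $C$ such that: (i) all entries in the first $k-(n-m)$ rows of $C$ are non-negative; (ii) at least one entry of $C$ equals $1$; (iii) all entries in the last $n-m$ rows of $C$ are zero; (iv) $J_{nm}+B\sim_M J_{k,\,k-(n-m)}+C$.
   Context: $J_{nm}$ ($0\le m\le n$) is the $n\times n$ matrix whose $i$-th row, for $i\le m$, has a $1$ in position $i$ and $0$ elsewhere, and whose last $n-m$ rows consist entirely of $\infty$. Arithmetic convention: $\infty+a=\infty$. For an $X\times X$ matrix $A$ with entries in $\{0,1,2,\dots\}\cup\{\infty\}$, $G_A$ is the graph with vertex set $X$ and exactly $A(x,y)$ edges from $x$ to $y$. A matrix $A$ is irreducible if $G_A$ is strongly connected. For matrices, $A\sim_M B$ means $G_A\sim_M G_B$. A graph may have multiple edges and loops. A source receives no edges, a sink emits no edges, and an infinite emitter emits infinitely many edges. A vertex is singular if it is a sink or infinite emitter, and regular otherwise. Move-equivalence $\sim_M$ is the smallest equivalence relation on graphs with finitely many vertices such that $G\sim_M E$ whenever $E$ is isomorphic to a graph obtained from $G$ by one of the following moves. (S) Delete a regular source together with the edges it emits. (R) For a regular vertex $u$ emitting exactly one edge $f$, with $r(f)\neq u$, and all of whose incoming edges have the same source $v$: delete $u$, $f$ and the edges into $u$, and add for each $e\in r^{-1}(u)$ an edge $[ef]$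 from $v$ to $r(f)$. (O) Out-splitting at a non-sink $v$ along a partition $\mathcal E_1,\dots,\mathcal E_n$ of $s^{-1}(v)$ with at most one infinite part. Replace $v$ by $v^1,\dots,v^n$. Each edge $e$ into $v$ becomes copies $e^1,\dots,e^n$ with $r(e^i)=v^i$ and source $s(e)$, or source $v^j$ if $s(e)=v$ and $e\in\mathcal E_j$. An edge from $v$ to $w\neq v$ lying in $\mathcal E_i$ gets source $v^i$. (I) In-splitting at a regular non-source $v$ along a partition $\mathcal E_1,\dots,\mathcal E_n$ of $r^{-1}(v)$. Replace $v$ by $v^1,\dots,v^n$. Each edge $e$ out of $v$ becomes copies $e^1,\dots,e^n$ with $s(e^i)=v^i$ and range $r(e)$, or range $v^j$ if $r(e)=v$ and $e\in\mathcal E_j$. An edge into $v$ from $w\neq v$ lying in $\mathcal E_i$ gets range $v^i$. *)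

theory Defs
  imports Main "HOL-Library.Extended_Nat" "HOL-Library.Nat_Bijection"
begin

record ('v, 'e) dgraph =
  gV :: "'v set"
  gE :: "'e set"
  gs :: "'e \<Rightarrow> 'v"
  gr :: "'e \<Rightarrow> 'v"

definition wf_graph :: "('v, 'e, 'x) dgraph_scheme \<Rightarrow> bool" where
  "wf_graph G \<longleftrightarrow> finite (gV G) \<and> (\<forall>e\<in>gE G. gs G e \<in> gV G \<and> gr G e \<in> gV G)"

definition graph_iso :: "('v, 'e) dgraph \<Rightarrow> ('w, 'f) dgraph \<Rightarrow> bool" where
  "graph_iso G H \<longleftrightarrow> (\<exists>\<phi> \<psi>. bij_betw \<phi> (gV G) (gV H) \<and> bij_betw \<psi> (gE G) (gE H) \<and>
     (\<forall>e\<in>gE G. gs H (\<psi> e) = \<phi> (gs G e) \<and> gr H (\<psi> e) = \<phi> (gr G e)))"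

definition out_edges :: "('v, 'e) dgraph \<Rightarrow> 'v \<Rightarrow> 'e set" where
  "out_edges G v = {e \<in> gE G. gs G e = v}"

definition in_edges :: "('v, 'e) dgraph \<Rightarrow> 'v \<Rightarrow> 'e set" where
  "in_edges G v = {e \<in> gE G. gr G e = v}"

definition is_sink :: "('v, 'e) dgraph \<Rightarrow> 'v \<Rightarrow> bool" where
  "is_sink G v \<longleftrightarrow> out_edges G v = {}"

definition is_source :: "('v, 'e) dgraph \<Rightarrow> 'v \<Rightarrow> bool" where
  "is_source G v \<longleftrightarrow> in_edges G v = {}"

definition infinite_emitter :: "('v, 'e) dgraph \<Rightarrow> 'v \<Rightarrow> bool" where
  "infinite_emitter G v \<longleftrightarrow> infinite (out_edges G v)"

definition regular :: "('v, 'e) dgraph \<Rightarrow> 'v \<Rightarrow> bool" where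
  "regular G v \<longleftrightarrow> \<not> is_sink G v \<and> \<not> infinite_emitter G v"

definition is_partition :: "'e set \<Rightarrow> nat \<Rightarrow> ('e \<Rightarrow> nat) \<Rightarrow> bool" where
  "is_partition S n c \<longleftrightarrow> (\<forall>e\<in>S. c e < n) \<and> (\<forall>i<n. \<exists>e\<in>S. c e = i)"

definition source_del :: "('v, 'e) dgraph \<Rightarrow> 'v \<Rightarrow> ('v, 'e) dgraph" where
  "source_del G u = \<lparr>gV = gV G - {u}, gE = gE G - out_edges G u, gs = gs G, gr = gr G\<rparr>"

definition move_S :: "('v, 'e) dgraph \<Rightarrow> ('v, 'e) dgraph \<Rightarrow> bool" where
  "move_S G H \<longleftrightarrow> (\<exists>u\<in>gV G. regular G u \<and> is_source G u \<and> graph_iso (source_del G u) H)"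

(* Move (R): Inl e = old edge e, Inr e = new edge [ef] *)
definition reduce :: "('v, 'e) dgraph \<Rightarrow> 'v \<Rightarrow> 'e \<Rightarrow> ('v, 'e + 'e) dgraph" where
  "reduce G u f = \<lparr>gV = gV G - {u},
     gE = Inl ` (gE G - {f} - in_edges G u) \<union> Inr ` in_edges G u,
     gs = case_sum (gs G) (gs G),
     gr = case_sum (gr G) (\<lambda>_. gr G f)\<rparr>"

definition move_R :: "('v, 'e) dgraph \<Rightarrow> ('v, 'e) dgraph \<Rightarrow> bool" where
  "move_R G H \<longleftrightarrow> (\<exists>u\<in>gV G. \<exists>f. regular G u \<and> out_edges G u = {f} \<and> gr G f \<noteq> u \<and>
      (\<exists>v\<in>gV G. \<forall>e\<in>in_edges G u. gs G e = v) \<and> graph_iso (reduce G u f) H)"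

(* Move (O): vertex Inr i = v^i (i < n), Inl w = old vertex w \<noteq> v;
   edge (e,i) = copy e^i of an edge e into v, (e,0) = the unique copy of any other edge *)
definition out_split :: "('v, 'e) dgraph \<Rightarrow> 'v \<Rightarrow> nat \<Rightarrow> ('e \<Rightarrow> nat) \<Rightarrow> ('v + nat, 'e \<times> nat) dgraph" where
  "out_split G v n c = \<lparr>gV = Inl ` (gV G - {v}) \<union> Inr ` {..<n},
     gE = {(e, i). e \<in> gE G \<and> gr G e = v \<and> i < n} \<union> {(e, 0) | e. e \<in> gE G \<and> gr G e \<noteq> v},
     gs = (\<lambda>(e, i). if gs G e = v then Inr (c e) else Inl (gs G e)),
     gr = (\<lambda>(e, i). if gr G e = v then Inr i else Inl (gr G e))\<rparr>"

definition move_O :: "('v, 'e) dgraph \<Rightarrow> ('v, 'e) dgraph \<Rightarrow> bool" where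
  "move_O G H \<longleftrightarrow> (\<exists>v\<in>gV G. \<exists>n c. \<not> is_sink G v \<and> is_partition (out_edges G v) n c \<and>
      (\<forall>i<n. \<forall>j<n. infinite {e \<in> out_edges G v. c e = i} \<and> infinite {e \<in> out_edges G v. c e = j}
          \<longrightarrow> i = j) \<and>
      graph_iso (out_split G v n c) H)"

(* Move (I): edge (e,i) = copy e^i of an edge e out of v, (e,0) = the unique copy of any other edge *)
definition in_split :: "('v, 'e) dgraph \<Rightarrow> 'v \<Rightarrow> nat \<Rightarrow> ('e \<Rightarrow> nat) \<Rightarrow> ('v + nat, 'e \<times> nat) dgraph" where
  "in_split G v n c = \<lparr>gV = Inl ` (gV G - {v}) \<union> Inr ` {..<n},
     gE = {(e, i). e \<in> gE G \<and> gs G e = v \<and> i < n} \<union> {(e, 0) | e. e \<in> gE G \<and> gs G e \<noteq> v},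
     gs = (\<lambda>(e, i). if gs G e = v then Inr i else Inl (gs G e)),
     gr = (\<lambda>(e, i). if gr G e = v then Inr (c e) else Inl (gr G e))\<rparr>"

definition move_I :: "('v, 'e) dgraph \<Rightarrow> ('v, 'e) dgraph \<Rightarrow> bool" where
  "move_I G H \<longleftrightarrow> (\<exists>v\<in>gV G. \<exists>n c. regular G v \<and> \<not> is_source G v \<and>
      is_partition (in_edges G v) n c \<and> graph_iso (in_split G v n c) H)"

definition one_move :: "('v, 'e) dgraph \<Rightarrow> ('v, 'e) dgraph \<Rightarrow> bool" where
  "one_move G H \<longleftrightarrow> wf_graph G \<and> (move_S G H \<or> move_R G H \<or> move_O G H \<or> move_I G H)"

(* Move equivalence, on graphs with finitely many vertices and countably many edges
   (vertices and edges labelled by nat) *)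
definition move_equiv :: "(nat, nat) dgraph \<Rightarrow> (nat, nat) dgraph \<Rightarrow> bool" where
  "move_equiv G H \<longleftrightarrow> wf_graph G \<and> wf_graph H \<and> equivclp one_move G H"

(* G_A for an n x n matrix A (indices 0..n-1) with entries in {0,1,...} \<union> {\<infinity>}:
   edges from x to y are the codes of (x, y, j) with j < A x y *)
definition graph_of_matrix :: "nat \<Rightarrow> (nat \<Rightarrow> nat \<Rightarrow> enat) \<Rightarrow> (nat, nat) dgraph" where
  "graph_of_matrix n A = \<lparr>gV = {..<n},
     gE = {prod_encode (x, prod_encode (y, j)) | x y j. x < n \<and> y < n \<and> enat j < A x y},
     gs = (\<lambda>e. fst (prod_decode e)),
     gr = (\<lambda>e. fst (prod_decode (snd (prod_decode e))))\<rparr>"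

definition strongly_connected :: "('v, 'e) dgraph \<Rightarrow> bool" where
  "strongly_connected G \<longleftrightarrow> (\<forall>x\<in>gV G. \<forall>y\<in>gV G.
     (\<lambda>a b. \<exists>e\<in>gE G. gs G e = a \<and> gr G e = b)\<^sup>*\<^sup>* x y)"

definition irreducible_mat :: "nat \<Rightarrow> (nat \<Rightarrow> nat \<Rightarrow> enat) \<Rightarrow> bool" where
  "irreducible_mat n A \<longleftrightarrow> strongly_connected (graph_of_matrix n A)"

definition matrix_move_equiv :: "nat \<Rightarrow> (nat \<Rightarrow> nat \<Rightarrow> enat) \<Rightarrow> nat \<Rightarrow> (nat \<Rightarrow> nat \<Rightarrow> enat) \<Rightarrow> bool" where
  "matrix_move_equiv n A k C \<longleftrightarrow> move_equiv (graph_of_matrix n A) (graph_of_matrix k C)"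

(* J_{nm}, 0-based indices: row i < m has 1 at position i, rows i \<ge> m are all \<infinity> *)
definition J :: "nat \<Rightarrow> nat \<Rightarrow> nat \<Rightarrow> nat \<Rightarrow> enat" where
  "J n m i j = (if i < m then (if i = j then 1 else 0) else \<infinity>)"

end

theory Submission
  imports Defs
begin

abbreviation enc :: "nat \<Rightarrow> nat \<Rightarrow> nat \<Rightarrow> nat" where
  "enc x y j \<equiv> prod_encode (x, prod_encode (y, j))"

definition dx :: "nat \<Rightarrow> nat" where "dx e = fst (prod_decode e)"
definition dy :: "nat \<Rightarrow> nat" where "dy e = fst (prod_decode (snd (prod_decode e)))"
definition dj :: "nat \<Rightarrow> nat" where "dj e = snd (prod_decode (snd (prod_decode e)))"

lemma dec_enc[simp]: "dx (enc x y j) = x" "dy (enc x y j) = y" "dj (enc x y j) = j"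
  by (simp_all add: dx_def dy_def dj_def)

lemma enc_dec: "enc (dx e) (dy e) (dj e) = e"
  by (simp add: dx_def dy_def dj_def)

lemma enc_cases: obtains x y j where "e = enc x y j"
  using enc_dec by metis

lemma gom_simps[simp]: "gV (graph_of_matrix N A) = {..<N}"
  "gs (graph_of_matrix N A) = dx" "gr (graph_of_matrix N A) = dy"
  by (auto simp: graph_of_matrix_def dx_def dy_def fun_eq_iff)

lemma enc_in[simp]: "enc x y j \<in> gE (graph_of_matrix N A) \<longleftrightarrow> x < N \<and> y < N \<and> enat j < A x y"
  by (auto simp: graph_of_matrix_def)

lemma gE_iff: "e \<in> gE (graph_of_matrix N A) \<longleftrightarrow> dx e < N \<and> dy e < N \<and> enat (dj e) < A (dx e) (dy e)"
  by (metis enc_in enc_dec)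

lemma wf_gom: "wf_graph (graph_of_matrix N A)"
  by (auto simp: wf_graph_def gE_iff)

definition MM :: "nat \<Rightarrow> nat \<Rightarrow> (nat \<Rightarrow> nat \<Rightarrow> nat) \<Rightarrow> nat \<Rightarrow> nat \<Rightarrow> enat" where
  "MM N p D i j = J N p i j + enat (D i j)"

lemma MM_simp: "MM N p D i j = (if i < p then enat ((if i = j then 1 else 0) + D i j) else \<infinity>)"
  by (simp add: MM_def J_def one_enat_def zero_enat_def)

definition sg :: "nat \<Rightarrow> nat \<Rightarrow> nat" where "sg p x = (if x \<le> p then x else x - 1)"
definition ph :: "nat \<Rightarrow> nat \<Rightarrow> nat" where "ph p x = (if x < p then x else x + 1)"
definition Dn :: "nat \<Rightarrow> (nat\<Rightarrow>nat\<Rightarrow>nat) \<Rightarrow> nat \<Rightarrow> nat \<Rightarrow> nat" where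
 "Dn p D i j = (if i < p then D i (sg p j) else if i = p then (if j = p + 1 then 1 else 0) else 0)"

definition psi :: "nat \<Rightarrow> nat \<times> nat \<Rightarrow> nat" where
 "psi p = (\<lambda>(e,i). if dy e = p then (if dx e = p then (if dj e = 0 then enc p (p+i) 0
     else enc (p+1) (p+i) (dj e - 1)) else enc (ph p (dx e)) (p+i) (dj e))
   else enc (ph p (dx e)) (ph p (dy e)) (dj e))"

definition psinv :: "nat \<Rightarrow> nat \<Rightarrow> nat \<times> nat" where
 "psinv p e' = (if dy e' = p \<or> dy e' = p+1 then
     (if dx e' = p then (enc p p 0, dy e' - p)
      else if dx e' = p+1 then (enc p p (dj e' + 1), dy e' - p)
      else (enc (sg p (dx e')) p (dj e'), dy e' - p))
   else (enc (sg p (dx e')) (sg p (dy e')) (dj e'), 0))"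

definition cc :: "nat \<Rightarrow> nat \<Rightarrow> nat" where "cc p e = (if e = enc p p 0 then 0 else 1)"

lemma out_split_E: "gE (out_split G v n c) = {(e, i). e \<in> gE G \<and> gr G e = v \<and> i < n} \<union> {(e, 0) | e. e \<in> gE G \<and> gr G e \<noteq> v}"
  by (simp add: out_split_def)

lemma psi_bij:
  assumes "p < N"
  shows "bij_betw (psi p) (gE (out_split (graph_of_matrix N (MM N p D)) p 2 (cc p)))
     (gE (graph_of_matrix (Suc N) (MM (Suc N) (Suc p) (Dn p D))))"
proof (rule bij_betw_byWitness[where f'="psinv p"])
  show "\<forall>a\<in>gE (out_split (graph_of_matrix N (MM N p D)) p 2 (cc p)). psinv p (psi p a) = a"
  proof
    fix a assume a: "a \<in> gE (out_split (graph_of_matrix N (MM N p D)) p 2 (cc p))"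
    obtain e i where ai: "a = (e, i)" by (cases a)
    obtain x y j where e: "e = enc x y j" by (rule enc_cases)
    show "psinv p (psi p a) = a" using a assms unfolding ai e out_split_E
      by (auto simp: psi_def psinv_def ph_def sg_def MM_simp)
  qed
  show "\<forall>a\<in>gE (graph_of_matrix (Suc N) (MM (Suc N) (Suc p) (Dn p D))). psi p (psinv p a) = a"
  proof
    fix a assume a: "a \<in> gE (graph_of_matrix (Suc N) (MM (Suc N) (Suc p) (Dn p D)))"
    obtain x y j where e: "a = enc x y j" by (rule enc_cases)
    show "psi p (psinv p a) = a" using a assms unfolding e
      by (auto simp: psi_def psinv_def ph_def sg_def MM_simp Dn_def split: if_splits)
  qed
  show "psi p ` gE (out_split (graph_of_matrix N (MM N p D)) p 2 (cc p)) \<subseteq> gE (graph_of_matrix (Suc N) (MM (Suc N) (Suc p) (Dn p D)))"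
  proof
    fix b assume "b \<in> psi p ` gE (out_split (graph_of_matrix N (MM N p D)) p 2 (cc p))"
    then obtain a where a: "a \<in> gE (out_split (graph_of_matrix N (MM N p D)) p 2 (cc p))" and b: "b = psi p a" by blast
    obtain e i where ai: "a = (e, i)" by (cases a)
    obtain x y j where e: "e = enc x y j" by (rule enc_cases)
    show "b \<in> gE (graph_of_matrix (Suc N) (MM (Suc N) (Suc p) (Dn p D)))" using a assms unfolding b ai e out_split_E
      by (auto simp: psi_def ph_def sg_def MM_simp Dn_def)
  qed
  show "psinv p ` gE (graph_of_matrix (Suc N) (MM (Suc N) (Suc p) (Dn p D))) \<subseteq> gE (out_split (graph_of_matrix N (MM N p D)) p 2 (cc p))"
  proof
    fix b assume "b \<in> psinv p ` gE (graph_of_matrix (Suc N) (MM (Suc N) (Suc p) (Dn p D)))"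
    then obtain a where a: "a \<in> gE (graph_of_matrix (Suc N) (MM (Suc N) (Suc p) (Dn p D)))" and b: "b = psinv p a" by blast
    obtain x y j where e: "a = enc x y j" by (rule enc_cases)
    show "b \<in> gE (out_split (graph_of_matrix N (MM N p D)) p 2 (cc p))" using a assms unfolding b e out_split_E
      by (auto simp: psinv_def ph_def sg_def MM_simp Dn_def split: if_splits)
  qed
qed


definition phi :: "nat \<Rightarrow> nat + nat \<Rightarrow> nat" where "phi p = case_sum (ph p) (\<lambda>i. p + i)"

lemma step_move:
  assumes "p < N"
  shows "one_move (graph_of_matrix N (MM N p D)) (graph_of_matrix (Suc N) (MM (Suc N) (Suc p) (Dn p D)))"
proof -
  let ?G = "graph_of_matrix N (MM N p D)"
  let ?H = "graph_of_matrix (Suc N) (MM (Suc N) (Suc p) (Dn p D))"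
  have f: "enc p p 0 \<in> out_edges ?G p" using assms by (simp add: out_edges_def MM_simp)
  have f1: "enc p p 1 \<in> out_edges ?G p" using assms by (simp add: out_edges_def MM_simp)
  have part: "is_partition (out_edges ?G p) 2 (cc p)"
    unfolding is_partition_def
  proof safe
    fix i :: nat assume "i < 2"
    then have "i = 0 \<or> i = 1" by auto
    then show "\<exists>e\<in>out_edges ?G p. cc p e = i"
    proof
      assume "i = 0" then show ?thesis using f by (auto simp: cc_def)
    next
      assume "i = 1" then show ?thesis using f1 by (intro bexI[of _ "enc p p 1"]) (auto simp: cc_def)
    qed
  qed (auto simp: cc_def)
  have fin: "finite {e \<in> out_edges ?G p. cc p e = 0}"
    by (rule finite_subset[of _ "{enc p p 0}"]) (auto simp: cc_def split: if_splits)
  have inf: "\<forall>i<2. \<forall>j<2. infinite {e \<in> out_edges ?G p. cc p e = i} \<and> infinite {e \<in> out_edges ?G p. cc p e = j}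
          \<longrightarrow> i = j"
  proof (intro allI impI)
    fix i j :: nat assume "i < 2" "j < 2" and h: "infinite {e \<in> out_edges ?G p. cc p e = i} \<and> infinite {e \<in> out_edges ?G p. cc p e = j}"
    then have "i \<noteq> 0" "j \<noteq> 0" using fin by auto
    then show "i = j" using \<open>i < 2\<close> \<open>j < 2\<close> by auto
  qed
  have bphi: "bij_betw (phi p) (gV (out_split ?G p 2 (cc p))) (gV ?H)"
  proof (rule bij_betw_byWitness[where f'="\<lambda>x. if x = p then Inr 0 else if x = p + 1 then Inr 1 else Inl (sg p x)"])
    show "\<forall>a\<in>gV (out_split ?G p 2 (cc p)). (if phi p a = p then Inr 0 else if phi p a = p + 1 then Inr 1 else Inl (sg p (phi p a))) = a"
      by (auto simp: out_split_def phi_def ph_def sg_def split: if_splits)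
    show "\<forall>a'\<in>gV ?H. phi p (if a' = p then Inr 0 else if a' = p + 1 then Inr 1 else Inl (sg p a')) = a'"
      by (auto simp: phi_def ph_def sg_def)
    show "phi p ` gV (out_split ?G p 2 (cc p)) \<subseteq> gV ?H"
      using assms by (auto simp: out_split_def phi_def ph_def split: if_splits)
    show "(\<lambda>x. if x = p then Inr 0 else if x = p + 1 then Inr 1 else Inl (sg p x)) ` gV ?H \<subseteq> gV (out_split ?G p 2 (cc p))"
    proof
      fix y :: "nat + nat" assume "y \<in> (\<lambda>x. if x = p then Inr 0 else if x = p + 1 then Inr 1 else Inl (sg p x)) ` gV ?H"
      then obtain x where x0: "x \<in> gV ?H" and y: "y = (if x = p then Inr 0 else if x = p + 1 then Inr 1 else Inl (sg p x))" by (rule imageE)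
      have x: "x < Suc N" using x0 by simp
      show "y \<in> gV (out_split ?G p 2 (cc p))"
      proof (cases "x = p \<or> x = p + 1")
        case True then show ?thesis using y by (auto simp: out_split_def)
      next
        case False
        then have "sg p x \<in> {..<N} - {p}" using x assms by (auto simp: sg_def)
        then show ?thesis using y False by (auto simp: out_split_def)
      qed
    qed
  qed
  have compat: "\<forall>e\<in>gE (out_split ?G p 2 (cc p)). gs ?H (psi p e) = phi p (gs (out_split ?G p 2 (cc p)) e) \<and>
       gr ?H (psi p e) = phi p (gr (out_split ?G p 2 (cc p)) e)"
  proof
    fix a assume a: "a \<in> gE (out_split ?G p 2 (cc p))"
    obtain e i where ai: "a = (e, i)" by (cases a)
    obtain x y j where e: "e = enc x y j" by (rule enc_cases)
    show "gs ?H (psi p a) = phi p (gs (out_split ?G p 2 (cc p)) a) \<and>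
       gr ?H (psi p a) = phi p (gr (out_split ?G p 2 (cc p)) a)"
      using a assms unfolding ai e out_split_E
      by (auto simp: psi_def phi_def ph_def cc_def out_split_def MM_simp)
  qed
  have iso: "graph_iso (out_split ?G p 2 (cc p)) ?H"
    unfolding graph_iso_def using bphi psi_bij[OF assms] compat by blast
  have "move_O ?G ?H"
    unfolding move_O_def using assms f part inf iso
    by (intro bexI[of _ p] exI[of _ 2] exI[of _ "cc p"]) (auto simp: is_sink_def)
  then show ?thesis by (simp add: one_move_def wf_gom)
qed

lemma chain:
  assumes "m < n"
  shows "\<exists>D. one_move\<^sup>*\<^sup>* (graph_of_matrix n (MM n m B)) (graph_of_matrix (n + t) (MM (n + t) (m + t) D))
     \<and> (t \<ge> 1 \<longrightarrow> D (m + t - 1) (m + t) = 1) \<and> (t \<ge> 1 \<longrightarrow> (\<forall>i j. i \<ge> m + t \<longrightarrow> D i j = 0))"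
proof (induction t)
  case 0
  show ?case by (intro exI[of _ B]) simp
next
  case (Suc t)
  then obtain D where D: "one_move\<^sup>*\<^sup>* (graph_of_matrix n (MM n m B)) (graph_of_matrix (n + t) (MM (n + t) (m + t) D))" by blast
  have "one_move (graph_of_matrix (n + t) (MM (n + t) (m + t) D)) (graph_of_matrix (Suc (n + t)) (MM (Suc (n + t)) (Suc (m + t)) (Dn (m + t) D)))"
    using assms by (intro step_move) simp
  with D have "one_move\<^sup>*\<^sup>* (graph_of_matrix n (MM n m B)) (graph_of_matrix (n + Suc t) (MM (n + Suc t) (m + Suc t) (Dn (m + t) D)))"
    by simp
  moreover have "Dn (m + t) D (m + Suc t - 1) (m + Suc t) = 1" by (simp add: Dn_def)
  moreover have "\<forall>i j. i \<ge> m + Suc t \<longrightarrow> Dn (m + t) D i j = 0" by (simp add: Dn_def)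
  ultimately show ?case by blast
qed

theorem proposition8p2:
  fixes n m :: nat and B :: "nat \<Rightarrow> nat \<Rightarrow> nat"
  assumes "m \<le> n" and "m \<noteq> n"
    and "\<forall>i j. m \<le> i \<and> i < n \<and> j < n \<longrightarrow> B i j = 0"
    and "irreducible_mat n (\<lambda>i j. J n m i j + enat (B i j))"
    and "irreducible_mat m (\<lambda>i j. J n m i j + enat (B i j))"
  shows "\<forall>k::nat. k \<ge> n + 2 \<longrightarrow> (\<exists>C :: nat \<Rightarrow> nat \<Rightarrow> int.
      (\<forall>i j. i < k - (n - m) \<and> j < k \<longrightarrow> C i j \<ge> 0) \<and>
      (\<exists>i j. i < k \<and> j < k \<and> C i j = 1) \<and>
      (\<forall>i j. k - (n - m) \<le> i \<and> i < k \<and> j < k \<longrightarrow> C i j = 0) \<and>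
      matrix_move_equiv n (\<lambda>i j. J n m i j + enat (B i j))
        k (\<lambda>i j. J k (k - (n - m)) i j + enat (nat (C i j))))"
proof (intro allI impI)
  fix k :: nat assume k: "k \<ge> n + 2"
  have mn: "m < n" using assms by simp
  define t where "t = k - n"
  have t1: "t \<ge> 1" and kt: "k = n + t" and pt: "k - (n - m) = m + t" using k mn by (auto simp: t_def)
  obtain D where D: "one_move\<^sup>*\<^sup>* (graph_of_matrix n (MM n m B)) (graph_of_matrix (n + t) (MM (n + t) (m + t) D))"
     and D1: "D (m + t - 1) (m + t) = 1" and D0: "\<forall>i j. i \<ge> m + t \<longrightarrow> D i j = 0"
    using chain[OF mn, of B t] t1 by blast
  define C :: "nat \<Rightarrow> nat \<Rightarrow> int" where "C = (\<lambda>i j. int (D i j))"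
  have e1: "(\<lambda>i j. J n m i j + enat (B i j)) = MM n m B" by (simp add: MM_def fun_eq_iff)
  have e2: "(\<lambda>i j. J k (k - (n - m)) i j + enat (nat (C i j))) = MM (n + t) (m + t) D"
    unfolding pt by (simp add: MM_def fun_eq_iff C_def kt)
  have "matrix_move_equiv n (\<lambda>i j. J n m i j + enat (B i j))
        k (\<lambda>i j. J k (k - (n - m)) i j + enat (nat (C i j)))"
    unfolding matrix_move_equiv_def move_equiv_def e1 e2
    using D kt by (simp add: wf_gom rtranclp_into_equivclp)
  moreover have "m + t - 1 < k" "m + t < k" using mn kt by auto
  ultimately show "\<exists>C :: nat \<Rightarrow> nat \<Rightarrow> int.
      (\<forall>i j. i < k - (n - m) \<and> j < k \<longrightarrow> C i j \<ge> 0) \<and>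
      (\<exists>i j. i < k \<and> j < k \<and> C i j = 1) \<and>
      (\<forall>i j. k - (n - m) \<le> i \<and> i < k \<and> j < k \<longrightarrow> C i j = 0) \<and>
      matrix_move_equiv n (\<lambda>i j. J n m i j + enat (B i j))
        k (\<lambda>i j. J k (k - (n - m)) i j + enat (nat (C i j)))"
    using D1 D0 pt by (intro exI[of _ C]) (auto simp: C_def)
qed

end
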